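(* Let $n\ge 2$, $d\ge 1$, and $p\in\mathcal H(n,d)$. Then $$ d\le \frac{2N(p)-3}{n-1}. $$
   Context: $\mathcal H(n,d)$ is the set of real polynomials in $x_1,\dots,x_n$ of total degree exactly $d$, with all coefficients nonnegative, such that $p(x)=1$ whenever $\sum_{j=1}^n x_j=1$. $N(p)$ denotes the number of distinct monomials occurring with nonzero coefficient in $p$. *)

theory Defs
  imports Complex_Main "HOL-Library.Poly_Mapping"
begin

text \<open>Real polynomials in the variables x_0,...,x_{n-1} are represented as finitely
  supported maps from monomials (exponent vectors, themselves finitely supported
  maps nat to nat) to real coefficients.\<close>

type_synonym rpoly = "(nat \<Rightarrow>\<^sub>0 nat) \<Rightarrow>\<^sub>0 real"

definition mono_degree :: "(nat \<Rightarrow>\<^sub>0 nat) \<Rightarrow> nat" where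
  "mono_degree \<alpha> = (\<Sum>i\<in>Poly_Mapping.keys \<alpha>. Poly_Mapping.lookup \<alpha> i)"

definition poly_in_vars :: "nat \<Rightarrow> rpoly \<Rightarrow> bool" where
  "poly_in_vars n p \<longleftrightarrow> (\<forall>\<alpha>\<in>Poly_Mapping.keys p. Poly_Mapping.keys \<alpha> \<subseteq> {..<n})"

definition total_degree :: "rpoly \<Rightarrow> nat" where
  "total_degree p = Max (insert 0 (mono_degree ` Poly_Mapping.keys p))"

definition eval_poly :: "rpoly \<Rightarrow> (nat \<Rightarrow> real) \<Rightarrow> real" where
  "eval_poly p x = (\<Sum>\<alpha>\<in>Poly_Mapping.keys p. Poly_Mapping.lookup p \<alpha> * (\<Prod>i\<in>Poly_Mapping.keys \<alpha>. x i ^ Poly_Mapping.lookup \<alpha> i))"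

definition num_monomials :: "rpoly \<Rightarrow> nat" where
  "num_monomials p = card (Poly_Mapping.keys p)"

definition H_class :: "nat \<Rightarrow> nat \<Rightarrow> rpoly set" where
  "H_class n d = {p. poly_in_vars n p \<and> Poly_Mapping.keys p \<noteq> {} \<and> total_degree p = d
      \<and> (\<forall>\<alpha>. Poly_Mapping.lookup p \<alpha> \<ge> 0)
      \<and> (\<forall>x::nat \<Rightarrow> real. (\<Sum>j<n. x j) = 1 \<longrightarrow> eval_poly p x = 1)}"

end

theory Submission imports Defs "HOL-Computational_Algebra.Polynomial" begin

fun W :: "real \<Rightarrow> real list \<Rightarrow> nat" where
  "W s [] = 0"
| "W s (x # xs) = (if x = 0 then W s xs else (if s * x < 0 then 1 else 0) + W x xs)"

lemma W_state: "s' \<noteq> 0 \<Longrightarrow> W s L \<le> W s' L + (if s * s' < 0 then 1 else 0)"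
proof (induction L)
  case Nil then show ?case by simp
next
  case (Cons x L)
  then show ?case by (auto simp: mult_less_0_iff)
qed

lemma W_state1: "W s L \<le> W s' L + 1"
proof (induction L)
  case Nil then show ?case by simp
next
  case (Cons x L)
  then show ?case by (auto simp: mult_less_0_iff)
qed

lemma W_sign: "s * s' > 0 \<Longrightarrow> W s L = W s' L"
proof -
  assume h: "s * s' > 0"
  then have "s \<noteq> 0" "s' \<noteq> 0" "\<not> s * s' < 0" "\<not> s' * s < 0" by (auto simp: mult.commute)
  then show ?thesis using W_state[of s' s L] W_state[of s s' L] by auto
qed

lemma W_cons_ge: "W s L \<le> W s (x # L)"
  using W_state[of x s L] by auto

lemma W_zeros: "\<forall>y\<in>set ys. y = 0 \<Longrightarrow> W s (xs @ ys) = W s xs"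
proof (induction xs arbitrary: s)
  case Nil then show ?case by (induction ys) auto
next
  case (Cons x xs) then show ?case by simp
qed

fun st :: "real \<Rightarrow> real list \<Rightarrow> real" where
  "st s [] = s"
| "st s (x # xs) = st (if x = 0 then s else x) xs"

lemma W_append: "W s (xs @ ys) = W s xs + W (st s xs) ys"
  by (induction xs arbitrary: s) auto

lemma W_update: "i < length xs \<Longrightarrow> W s (xs[i := y]) \<le> W s xs + 2"
proof -
  assume i: "i < length xs"
  define T where "T = take i xs"
  define R where "R = drop (Suc i) xs"
  have e1: "xs[i := y] = T @ y # R" unfolding T_def R_def using i by (rule upd_conv_take_nth_drop)
  have e2: "xs = T @ xs ! i # R" unfolding T_def R_def using i by (rule id_take_nth_drop)
  define \<sigma> where "\<sigma> = st s T"
  have c1: "W \<sigma> (y # R) \<le> W \<sigma> R + 2"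
    using W_state1[of y R \<sigma>] by auto
  have c2: "W \<sigma> R \<le> W \<sigma> (xs ! i # R)" by (rule W_cons_ge)
  have "W \<sigma> (y # R) \<le> W \<sigma> (xs ! i # R) + 2" using c1 c2 by linarith
  moreover have "W s (T @ y # R) = W s T + W \<sigma> (y # R)" by (simp add: W_append \<sigma>_def)
  moreover have f2: "W s (T @ xs ! i # R) = W s T + W \<sigma> (xs ! i # R)" by (simp add: W_append \<sigma>_def)
  moreover have "W s xs = W s T + W \<sigma> (xs ! i # R)" using f2 by (simp only: e2[symmetric])
  ultimately show ?thesis using e1 by simp
qed

lemma W_count: "W s L + (if s = 0 \<and> (\<exists>y\<in>set L. y \<noteq> 0) then 1 else 0) \<le> length (filter (\<lambda>y. y \<noteq> 0) L)"
proof (induction L arbitrary: s)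
  case Nil then show ?case by simp
next
  case (Cons x L)
  show ?case
  proof (cases "x = 0")
    case True then show ?thesis using Cons[of s] by auto
  next
    case False
    then show ?thesis using Cons[of x] by (auto split: if_splits)
  qed
qed

fun hh :: "real \<Rightarrow> real list \<Rightarrow> real list" where
  "hh a [] = [- a]"
| "hh a (x # xs) = (x - a) # hh x xs"

lemma W_allzero: "\<forall>y\<in>set g. y = 0 \<Longrightarrow> W s g = 0"
  by (induction g) auto

lemma hh_zeros: "\<forall>y\<in>set g. y = 0 \<Longrightarrow> W s (hh a g) = W s [- a]"
proof (induction g arbitrary: a s)
  case Nil then show ?case by simp
next
  case (Cons x g)
  then have "x = 0" "\<forall>y\<in>set g. y = 0" by auto
  have "W s (hh 0 g) = W s [- 0]" for s by (rule Cons.IH[OF \<open>\<forall>y\<in>set g. y = 0\<close>])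
  then show ?case using \<open>x = 0\<close> by (simp add: W_allzero)
qed

lemma hh_main:
  "((\<exists>y\<in>set g. y \<noteq> 0) \<and> (a = 0 \<or> s * a > 0) \<longrightarrow> W s (hh a g) \<ge> W s g + 1) \<and>
   (s * a < 0 \<longrightarrow> W s (hh a g) \<ge> W a g)"
proof (induction g arbitrary: a s)
  case Nil
  then show ?case by (auto simp: mult_less_0_iff)
next
  case (Cons x g)
  have IH1: "W s (hh a g) \<ge> W s g + 1" if "\<exists>y\<in>set g. y \<noteq> 0" "a = 0 \<or> s * a > 0" for a s
    using Cons.IH[of a s] that by (simp only: simp_thms)
  have IH2: "W s (hh a g) \<ge> W a g" if "s * a < 0" for a s
    using Cons.IH[of a s] that by (simp only: simp_thms)
  have H: "hh a (x # g) = (x - a) # hh x g" by simp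
  have Z: "\<And>s. x \<noteq> 0 \<Longrightarrow> \<not> (\<exists>y\<in>set g. y \<noteq> 0) \<Longrightarrow> W s (hh x g) = W s [-x]"
    using hh_zeros by blast
  have Z0: "\<not> (\<exists>y\<in>set g. y \<noteq> 0) \<Longrightarrow> W s g = 0" for s using W_allzero by blast
  have A: "W s (hh x g) \<ge> W x g + 1" if "s * x > 0" "x \<noteq> 0" for s
  proof (cases "\<exists>y\<in>set g. y \<noteq> 0")
    case True
    then have "W s (hh x g) \<ge> W s g + 1" using IH1 that by blast
    moreover have "W s g = W x g" using W_sign that by blast
    ultimately show ?thesis by simp
  next
    case False
    then show ?thesis using Z[OF that(2) False] Z0[OF False] that by (auto simp: mult_less_0_iff zero_less_mult_iff)
  qed
  have P2: "W a (x # g) \<le> W s (hh a (x # g))" if sa: "s * a < 0"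
  proof (cases "x = 0")
    case True
    have "s * (- a) = - (s * a)" by simp
    then have a1: "\<not> s * (- a) < 0" using sa by linarith
    have a2: "a \<noteq> 0" using sa by auto
    note a0 = a2 a1
    have R: "W s (hh a (x # g)) = W (-a) (hh 0 g)" using True a0 by simp
    show ?thesis
    proof (cases "\<exists>y\<in>set g. y \<noteq> 0")
      case True
      have "W (-a) (hh 0 g) \<ge> W (-a) g + 1" using IH1[OF True] by blast
      moreover have "W a g \<le> W (-a) g + 1" by (rule W_state1)
      ultimately show ?thesis using R \<open>x = 0\<close> by simp
    next
      case False
      then show ?thesis using Z0 \<open>x = 0\<close> by simp
    qed
  next
    case xn: False
    have L: "W a (x # g) = (if a * x < 0 then 1 else 0) + W x g" using xn by simp
    show ?thesis
    proof (cases "x = a")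
      case True
      then have "W s (hh a (x # g)) = W s (hh x g)" by simp
      moreover have "W s (hh x g) \<ge> W x g" using IH2[of s x] sa True by simp
      moreover have "\<not> a * x < 0" using True by (simp add: mult_less_0_iff)
      ultimately show ?thesis using L by simp
    next
      case False
      then have R: "W s (hh a (x # g)) = (if s * (x - a) < 0 then 1 else 0) + W (x - a) (hh x g)" by simp
      show ?thesis
      proof (cases "(x - a) * x > 0")
        case True
        have "W (x - a) (hh x g) = W x (hh x g)" using W_sign True by blast
        moreover have "W x (hh x g) \<ge> W x g + 1" using A[of x] xn by (metis not_real_square_gt_zero)
        ultimately show ?thesis using L R by simp
      next
        case False
        then have "(x - a) * x < 0" using xn \<open>x \<noteq> a\<close> by (auto simp: mult_less_0_iff zero_less_mult_iff)
        then have "W (x - a) (hh x g) \<ge> W x g" using IH2 by blast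
        moreover have "\<not> a * x < 0"
        proof
          assume "a * x < 0"
          moreover have "x * x > 0" using xn not_real_square_gt_zero by blast
          moreover have "(x - a) * x = x * x - a * x" by (simp add: algebra_simps)
          ultimately have "(x - a) * x > 0" by linarith
          then show False using \<open>(x - a) * x < 0\<close> by simp
        qed
        ultimately show ?thesis using L R by simp
      qed
    qed
  qed
  have P1: "W s (x # g) + 1 \<le> W s (hh a (x # g))" if nz: "\<exists>y\<in>set (x # g). y \<noteq> 0" and as: "a = 0 \<or> s * a > 0"
  proof (cases "x = 0")
    case True
    then have gnz: "\<exists>y\<in>set g. y \<noteq> 0" using nz by auto
    show ?thesis
    proof (cases "a = 0")
      case True
      then show ?thesis using IH1[OF gnz, of 0 s] \<open>x = 0\<close> by simp
    next
      case False
      then have sa: "s * a > 0" using as by simp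
      have "s * (- a) = - (s * a)" by simp
      then have "s * (- a) < 0" using sa by linarith
      then have R: "W s (hh a (x # g)) = 1 + W (-a) (hh 0 g)" using \<open>x = 0\<close> False by simp
      have "W (-a) (hh 0 g) \<ge> W (-a) g + 1" using IH1[OF gnz, of 0 "-a"] by simp
      moreover have "W s g \<le> W (-a) g + 1" by (rule W_state1)
      ultimately show ?thesis using R \<open>x = 0\<close> by simp
    qed
  next
    case xn: False
    have L: "W s (x # g) = (if s * x < 0 then 1 else 0) + W x g" using xn by simp
    show ?thesis
    proof (cases "x = a")
      case True
      then have sx: "s * x > 0" using as xn by auto
      then have "W s (hh x g) \<ge> W x g + 1" using A xn by blast
      moreover have "\<not> s * x < 0" using sx by simp
      ultimately show ?thesis using L True by simp
    next
      case False
      then have R: "W s (hh a (x # g)) = (if s * (x - a) < 0 then 1 else 0) + W (x - a) (hh x g)" by simp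
      show ?thesis
      proof (cases "(x - a) * x > 0")
        case True
        have "W (x - a) (hh x g) = W x (hh x g)" using W_sign True by blast
        moreover have "W x (hh x g) \<ge> W x g + 1" using A[of x] xn by (metis not_real_square_gt_zero)
        moreover have "(s * (x - a) < 0) = (s * x < 0)" using True
          by (auto simp: mult_less_0_iff zero_less_mult_iff)
        ultimately show ?thesis using L R by simp
      next
        case False
        then have xa: "(x - a) * x < 0" using xn \<open>x \<noteq> a\<close> by (auto simp: mult_less_0_iff zero_less_mult_iff)
        then have "W (x - a) (hh x g) \<ge> W x g" using IH2 by blast
        moreover have "s * x > 0 \<and> s * (x - a) < 0"
        proof -
          have "x * x > 0" using xn not_real_square_gt_zero by blast
          moreover have "(x - a) * x = x * x - a * x" by (simp add: algebra_simps)
          ultimately have ax: "a * x > 0" using xa by linarith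
          then have "a \<noteq> 0" by auto
          then have "s * a > 0" using as by simp
          then have "s * x > 0" using ax by (auto simp: zero_less_mult_iff)
          then show ?thesis using xa by (auto simp: mult_less_0_iff zero_less_mult_iff)
        qed
        ultimately show ?thesis using L R by simp
      qed
    qed
  qed
  show ?case using P1 P2 by blast
qed


lemma hh_length: "length (hh a xs) = Suc (length xs)"
  by (induction xs arbitrary: a) auto

lemma hh_nth: "j \<le> length xs \<Longrightarrow>
  hh a xs ! j = (if j < length xs then xs ! j else 0) - (if j = 0 then a else xs ! (j - 1))"
proof (induction xs arbitrary: a j)
  case Nil then show ?case by simp
next
  case (Cons x xs)
  show ?case
  proof (cases j)
    case 0 then show ?thesis by simp
  next
    case (Suc j')
    then have "j' \<le> length xs" using Cons.prems by simp
    then show ?thesis using Cons.IH[of j' x] Suc by (cases j') auto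
  qed
qed

definition altl :: "real poly \<Rightarrow> nat \<Rightarrow> real list" where
  "altl f K = map (\<lambda>i. (-1) ^ i * coeff f i) [0..<K]"

definition SV :: "real poly \<Rightarrow> nat" where
  "SV f = W 0 (altl f (Suc (degree f)))"

lemma SV_K: "degree f < K \<Longrightarrow> SV f = W 0 (altl f K)"
proof -
  assume K: "degree f < K"
  have "[0..<K] = [0..<Suc (degree f)] @ [Suc (degree f)..<K]"
    using K upt_add_eq_append[of 0 "Suc (degree f)" "K - Suc (degree f)"] by simp
  then have "altl f K = altl f (Suc (degree f)) @ map (\<lambda>i. (-1) ^ i * coeff f i) [Suc (degree f)..<K]"
    unfolding altl_def by simp
  moreover have "\<forall>y\<in>set (map (\<lambda>i. (-1) ^ i * coeff f i) [Suc (degree f)..<K]). y = 0"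
    by (auto simp: coeff_eq_0)
  ultimately show ?thesis unfolding SV_def by (simp add: W_zeros)
qed

lemma coeff_x1_mult: "coeff ([:1,1:] * (f :: real poly)) j = coeff f j + (if j = 0 then 0 else coeff f (j - 1))"
proof -
  have "[:1,1:] * f = f + pCons 0 f" by (simp add: mult_pCons_left smult_one)
  then show ?thesis by (cases j) auto
qed

lemma SV_mult1: "f \<noteq> 0 \<Longrightarrow> SV ([:1,1:] * f) \<ge> SV f + 1"
proof -
  assume f: "f \<noteq> 0"
  define K where "K = Suc (degree f)"
  have dg: "degree ([:1,1:] * f) < Suc K"
    using degree_mult_le[of "[:1,1:]" f] unfolding K_def by simp
  have eq: "altl ([:1,1:] * f) (Suc K) = hh 0 (altl f K)"
  proof (rule nth_equalityI)
    show "length (altl ([:1, 1:] * f) (Suc K)) = length (hh 0 (altl f K))"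
      by (simp add: altl_def hh_length)
  next
    fix j assume "j < length (altl ([:1, 1:] * f) (Suc K))"
    then have j: "j < Suc K" by (simp add: altl_def)
    have cK: "coeff f K = 0" unfolding K_def by (simp add: coeff_eq_0)
    have "hh 0 (altl f K) ! j = (if j < K then (-1)^j * coeff f j else 0) - (if j = 0 then 0 else (-1)^(j-1) * coeff f (j - 1))"
      using j by (subst hh_nth) (auto simp: altl_def)
    also have "\<dots> = (-1)^j * coeff ([:1,1:] * f) j"
    proof (cases j)
      case 0 then show ?thesis using K_def by (simp add: coeff_x1_mult)
    next
      case (Suc i)
      have "(if j < K then (-1)^j * coeff f j else 0) = (-1)^j * coeff f j"
        using j cK by (auto simp: less_Suc_eq)
      then show ?thesis using Suc by (simp add: coeff_x1_mult algebra_simps)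
    qed
    moreover have "altl ([:1, 1:] * f) (Suc K) ! j = (-1)^j * coeff ([:1,1:] * f) j"
      using j unfolding altl_def by (simp del: upt_Suc)
    ultimately show "altl ([:1, 1:] * f) (Suc K) ! j = hh 0 (altl f K) ! j"
      by simp
  qed
  have nz: "\<exists>y\<in>set (altl f K). y \<noteq> 0"
  proof -
    have "(-1)^(degree f) * coeff f (degree f) \<noteq> 0" using f by simp
    moreover have "(-1)^(degree f) * coeff f (degree f) \<in> set (altl f K)"
      unfolding altl_def K_def by auto
    ultimately show ?thesis by blast
  qed
  have "W 0 (hh 0 (altl f K)) \<ge> W 0 (altl f K) + 1"
    using hh_main[of "altl f K" 0 0] nz by simp
  then show ?thesis
    using SV_K[OF dg] eq SV_def K_def by simp
qed

lemma SV_multB: "f \<noteq> 0 \<Longrightarrow> SV ([:1,1:] ^ m * f) \<ge> SV f + m"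
proof (induction m)
  case 0 then show ?case by simp
next
  case (Suc m)
  have nz: "[:1,1:] ^ m * f \<noteq> 0" using Suc.prems by simp
  have eq: "[:1,1:] ^ Suc m * f = [:1,1:] * ([:1,1:] ^ m * f)" by (simp only: power_Suc mult.assoc)
  have "SV ([:1,1:] ^ Suc m * f) \<ge> SV ([:1,1:] ^ m * f) + 1"
    unfolding eq by (rule SV_mult1[OF nz])
  then show ?case using Suc.IH Suc.prems by linarith
qed

lemma SV_add_monom: "SV (f + monom c e) \<le> SV f + 2"
proof -
  define K where "K = Suc (max (degree f) (max e (degree (f + monom c e))))"
  have eq: "altl (f + monom c e) K = (altl f K)[e := (-1)^e * (coeff f e + c)]"
  proof (rule nth_equalityI)
    show "length (altl (f + monom c e) K) = length ((altl f K)[e := (-1)^e * (coeff f e + c)])"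
      by (simp add: altl_def)
  next
    fix i assume "i < length (altl (f + monom c e) K)"
    then have i: "i < K" by (simp add: altl_def)
    have ek: "e < K" by (simp add: K_def)
    show "altl (f + monom c e) K ! i = (altl f K)[e := (-1)^e * (coeff f e + c)] ! i"
      using i ek unfolding altl_def by (simp add: nth_list_update coeff_monom del: upt_Suc)
  qed
  have "e < length (altl f K)" by (simp add: altl_def K_def)
  then have "W 0 ((altl f K)[e := (-1)^e * (coeff f e + c)]) \<le> W 0 (altl f K) + 2"
    by (rule W_update)
  moreover have "SV (f + monom c e) = W 0 (altl (f + monom c e) K)" by (rule SV_K) (simp add: K_def)
  moreover have "SV f = W 0 (altl f K)" by (rule SV_K) (simp add: K_def)
  ultimately show ?thesis using eq by simp
qed

lemma SV_add_sum: "finite S \<Longrightarrow> SV (f + (\<Sum>e\<in>S. monom (c e) e)) \<le> SV f + 2 * card S"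
proof (induction S arbitrary: f rule: finite_induct)
  case empty then show ?case by simp
next
  case (insert x F)
  have "f + (\<Sum>e\<in>insert x F. monom (c e) e) = (f + (\<Sum>e\<in>F. monom (c e) e)) + monom (c x) x"
    using insert by (simp add: algebra_simps)
  then have "SV (f + (\<Sum>e\<in>insert x F. monom (c e) e)) \<le> SV (f + (\<Sum>e\<in>F. monom (c e) e)) + 2"
    by (simp only: SV_add_monom)
  moreover have "card (insert x F) = Suc (card F)" using insert by simp
  ultimately show ?case using insert.IH[of f] by linarith
qed

definition supp :: "real poly \<Rightarrow> nat set" where
  "supp Q = {e. coeff Q e \<noteq> 0}"

lemma supp_finite: "finite (supp Q)"
proof -
  have "supp Q \<subseteq> {..degree Q}" unfolding supp_def using le_degree by auto
  then show ?thesis using finite_subset by blast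
qed

lemma poly_supp_sum: "Q = (\<Sum>e\<in>supp Q. monom (coeff Q e) e)"
proof (rule poly_eqI)
  fix n
  have "coeff (\<Sum>e\<in>supp Q. monom (coeff Q e) e) n = (\<Sum>e\<in>supp Q. if e = n then coeff Q e else 0)"
    by (simp add: coeff_sum coeff_monom)
  also have "\<dots> = coeff Q n" using supp_finite[of Q] by (auto simp: supp_def)
  finally show "coeff Q n = coeff (\<Sum>e\<in>supp Q. monom (coeff Q e) e) n" by simp
qed

lemma SV_add: "SV (f + Q) \<le> SV f + 2 * card (supp Q)"
proof -
  have "SV (f + (\<Sum>e\<in>supp Q. monom (coeff Q e) e)) \<le> SV f + 2 * card (supp Q)"
    by (rule SV_add_sum[OF supp_finite])
  then show ?thesis using poly_supp_sum[of Q] by simp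
qed

lemma SV_count: "Q \<noteq> 0 \<Longrightarrow> SV Q + 1 \<le> card (supp Q)"
proof -
  assume Q: "Q \<noteq> 0"
  define L where "L = altl Q (Suc (degree Q))"
  have nz: "\<exists>y\<in>set L. y \<noteq> 0"
  proof -
    have "(-1)^(degree Q) * coeff Q (degree Q) \<noteq> 0" using Q by simp
    moreover have "(-1)^(degree Q) * coeff Q (degree Q) \<in> set L"
      unfolding altl_def L_def by auto
    ultimately show ?thesis by blast
  qed
  have "W 0 L + 1 \<le> length (filter (\<lambda>y. y \<noteq> 0) L)" using W_count[of 0 L] nz by simp
  also have "length (filter (\<lambda>y. y \<noteq> 0) L) = card {i. i < length L \<and> L ! i \<noteq> 0}"
    by (rule length_filter_conv_card)
  also have "{i. i < length L \<and> L ! i \<noteq> 0} = supp Q"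
    by (auto simp: L_def altl_def supp_def le_degree less_Suc_eq_le simp del: upt_Suc)
  finally show ?thesis unfolding SV_def L_def by simp
qed


lemma poly1_pos: "(\<And>j. coeff (Q::real poly) j \<ge> 0) \<Longrightarrow> Q \<noteq> 0 \<Longrightarrow> poly Q 1 > 0"
proof -
  assume nn: "\<And>j. coeff Q j \<ge> 0" and nz: "Q \<noteq> 0"
  have "poly Q 1 = (\<Sum>i\<le>degree Q. coeff Q i)" by (simp add: poly_altdef)
  also have "\<dots> > 0"
  proof (rule sum_pos2)
    show "finite {..degree Q}" by simp
    show "degree Q \<in> {..degree Q}" by simp
    show "0 < coeff Q (degree Q)" using nn[of "degree Q"] nz by (simp add: order_le_less)
    show "\<And>i. i \<in> {..degree Q} \<Longrightarrow> 0 \<le> coeff Q i" using nn by simp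
  qed
  finally show ?thesis .
qed

lemma poly1_nonneg: "(\<And>j. coeff (Q::real poly) j \<ge> 0) \<Longrightarrow> poly Q 1 \<ge> 0"
  by (simp add: poly_altdef sum_nonneg)

theorem core:
  fixes Q :: "nat \<Rightarrow> real poly" and m d :: nat
  assumes m: "m \<ge> 1" and d: "d \<ge> 1" and nn: "\<And>k j. coeff (Q k) j \<ge> 0" and Qd: "Q d \<noteq> 0"
    and ident: "(\<Sum>k\<le>d. Q k * ([:1,1:] ^ m) ^ (d - k)) = ([:1,1:] ^ m) ^ d"
  shows "m * d + 3 \<le> 2 * (\<Sum>k\<le>d. card (supp (Q k)))"
proof -
  define B :: "real poly" where "B = [:1,1:] ^ m"
  define L where "L k = B ^ k - (\<Sum>j\<le>k. Q j * B ^ (k - j))" for k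
  define c where "c k = card (supp (Q k))" for k
  have Lrec: "L (Suc k) + Q (Suc k) = B * L k" for k
  proof -
    have "(\<Sum>j\<le>k. Q j * B ^ (Suc k - j)) = B * (\<Sum>j\<le>k. Q j * B ^ (k - j))"
      by (auto simp: sum_distrib_left Suc_diff_le algebra_simps intro!: sum.cong)
    then show ?thesis unfolding L_def by (simp add: algebra_simps)
  qed
  have Ld: "L d = 0" using ident unfolding L_def B_def by simp
  have tail: "B ^ (d - k) * L k = (\<Sum>j\<in>{k<..d}. Q j * B ^ (d - j))" if kd: "k \<le> d" for k
  proof -
    have s1: "B ^ (d - k) * (\<Sum>j\<le>k. Q j * B ^ (k - j)) = (\<Sum>j\<le>k. Q j * B ^ (d - j))"
    proof -
      have "B ^ (d - k) * (\<Sum>j\<le>k. Q j * B ^ (k - j)) = (\<Sum>j\<le>k. Q j * (B ^ (d - k) * B ^ (k - j)))"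
        by (simp add: sum_distrib_left algebra_simps)
      also have "\<dots> = (\<Sum>j\<le>k. Q j * B ^ (d - j))"
      proof (rule sum.cong)
        fix j assume "j \<in> {..k}"
        then have "d - k + (k - j) = d - j" using kd by auto
        then show "Q j * (B ^ (d - k) * B ^ (k - j)) = Q j * B ^ (d - j)" by (simp add: power_add[symmetric])
      qed simp
      finally show ?thesis .
    qed
    have s2: "(\<Sum>j\<le>d. Q j * B ^ (d - j)) = (\<Sum>j\<le>k. Q j * B ^ (d - j)) + (\<Sum>j\<in>{k<..d}. Q j * B ^ (d - j))"
    proof -
      have "{..d} = {..k} \<union> {k<..d}" using kd by auto
      then have "(\<Sum>j\<le>d. Q j * B ^ (d - j)) = (\<Sum>j\<in>{..k} \<union> {k<..d}. Q j * B ^ (d - j))" by simp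
      also have "\<dots> = (\<Sum>j\<le>k. Q j * B ^ (d - j)) + (\<Sum>j\<in>{k<..d}. Q j * B ^ (d - j))"
        by (rule sum.union_disjoint) auto
      finally show ?thesis .
    qed
    have "B ^ (d - k) * L k = B ^ (d - k) * B ^ k - B ^ (d - k) * (\<Sum>j\<le>k. Q j * B ^ (k - j))"
      unfolding L_def by (simp add: algebra_simps)
    also have "B ^ (d - k) * B ^ k = B ^ d" using kd by (simp add: power_add[symmetric])
    also have "B ^ d = (\<Sum>j\<le>d. Q j * B ^ (d - j))" using ident unfolding B_def by simp
    finally show ?thesis using s1 s2 by simp
  qed
  have Lnz: "L k \<noteq> 0" if kd: "k < d" for k
  proof
    assume "L k = 0"
    have pos: "poly (B ^ (d - k) * L k) 1 > 0"
    proof -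
      have pB: "poly B 1 > 0" unfolding B_def by simp
      have "poly (B ^ (d - k) * L k) 1 = (\<Sum>j\<in>{k<..d}. poly (Q j) 1 * poly B 1 ^ (d - j))"
        using tail[of k] kd by (simp add: poly_sum)
      also have "\<dots> > 0"
      proof (rule sum_pos2)
        show "finite {k<..d}" by simp
        show "d \<in> {k<..d}" using kd by simp
        show "0 < poly (Q d) 1 * poly B 1 ^ (d - d)" using poly1_pos[OF nn Qd] by simp
        show "\<And>i. i \<in> {k<..d} \<Longrightarrow> 0 \<le> poly (Q i) 1 * poly B 1 ^ (d - i)"
          using poly1_nonneg[OF nn] pB by simp
      qed
      finally show ?thesis .
    qed
    then show False using \<open>L k = 0\<close> by simp
  qed
  have step: "SV (L i) + m \<le> SV (L (Suc i)) + 2 * c (Suc i)" if "i < d" for i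
  proof -
    have "SV (L i) + m \<le> SV (B * L i)" using SV_multB[OF Lnz[OF that], of m] unfolding B_def by simp
    also have "B * L i = L (Suc i) + Q (Suc i)" using Lrec by simp
    also have "SV (L (Suc i) + Q (Suc i)) \<le> SV (L (Suc i)) + 2 * c (Suc i)" unfolding c_def by (rule SV_add)
    finally show ?thesis .
  qed
  have chain: "SV (L 0) + m * i \<le> SV (L i) + 2 * (\<Sum>k\<in>{1..i}. c k)" if "i < d" for i
    using that
  proof (induction i)
    case 0 then show ?case by simp
  next
    case (Suc i)
    then have "SV (L 0) + m * i \<le> SV (L i) + 2 * (\<Sum>k\<in>{1..i}. c k)" by simp
    moreover have "SV (L i) + m \<le> SV (L (Suc i)) + 2 * c (Suc i)" using step Suc.prems by simp
    moreover have "(\<Sum>k\<in>{1..Suc i}. c k) = (\<Sum>k\<in>{1..i}. c k) + c (Suc i)" by simp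
    ultimately show ?case by simp
  qed
  obtain d' where d': "d = Suc d'" using d by (cases d) auto
  have top1: "SV (L d') + m \<le> SV (Q d)"
  proof -
    have "SV (L d') + m \<le> SV (B * L d')" using SV_multB[OF Lnz, of d' m] d' unfolding B_def by simp
    also have "B * L d' = Q d" using Lrec[of d'] Ld d' by simp
    finally show ?thesis .
  qed
  have top2: "SV (Q d) + 1 \<le> c d" unfolding c_def by (rule SV_count[OF Qd])
  have ch: "m * d' \<le> SV (L d') + 2 * (\<Sum>k\<in>{1..d'}. c k)" using chain[of d'] d' by simp
  have sums: "(\<Sum>k\<le>d. c k) \<ge> (\<Sum>k\<in>{1..d'}. c k) + c d"
  proof -
    have "(\<Sum>k\<le>d. c k) = (\<Sum>k\<le>d'. c k) + c d" using d' by simp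
    moreover have "(\<Sum>k\<in>{1..d'}. c k) \<le> (\<Sum>k\<le>d'. c k)" by (rule sum_mono2) auto
    ultimately show ?thesis by simp
  qed
  have "m * d = m * d' + m" using d' by simp
  define S where "S = (\<Sum>k\<in>{1..d'}. c k)"
  define V where "V = SV (L d')"
  define VQ where "VQ = SV (Q d)"
  have a1: "V + m \<le> VQ" using top1 V_def VQ_def by simp
  have a2: "VQ + 1 \<le> c d" using top2 VQ_def by simp
  have a3: "m * d' \<le> V + 2 * S" using ch V_def S_def by simp
  have lin: "X + 3 \<le> 2 * (S + C)" if "V + m \<le> VQ" "VQ + 1 \<le> C" "Y \<le> V + 2 * S" "1 \<le> m" "X = Y + m"
    for X Y V VQ S C m :: nat
    using that by presburger
  have "m * d + 3 \<le> 2 * (S + c d)" by (rule lin[OF a1 a2 a3 m \<open>m * d = m * d' + m\<close>])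
  then have "m * d + 3 \<le> 2 * ((\<Sum>k\<in>{1..d'}. c k) + c d)" using S_def by simp
  moreover have "2 * ((\<Sum>k\<in>{1..d'}. c k) + c d) \<le> 2 * (\<Sum>k\<le>d. c k)"
    using sums by (rule mult_le_mono2)
  ultimately show ?thesis unfolding c_def by (rule order_trans)
qed


lemma poly_eq_pos: "(\<And>t::real. t > 0 \<Longrightarrow> poly P t = poly R t) \<Longrightarrow> P = R"
proof (rule ccontr)
  assume h: "\<And>t::real. t > 0 \<Longrightarrow> poly P t = poly R t" and ne: "P \<noteq> R"
  then have "P - R \<noteq> 0" by simp
  then have "finite {t. poly (P - R) t = 0}" by (rule poly_roots_finite)
  moreover have "{0<..} \<subseteq> {t. poly (P - R) t = 0}" using h by auto
  ultimately have "finite {0::real<..}" using finite_subset by blast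
  then show False using infinite_Ioi by blast
qed

theorem proposition4:
  fixes n d :: nat and p :: rpoly
  assumes "n \<ge> 2" and "d \<ge> 1" and "p \<in> H_class n d"
  shows "real d \<le> (2 * real (num_monomials p) - 3) / (real n - 1)"
proof -
  have vars: "poly_in_vars n p" and kne: "Poly_Mapping.keys p \<noteq> {}" and td: "total_degree p = d"
    and nn: "\<And>\<alpha>. Poly_Mapping.lookup p \<alpha> \<ge> 0"
    and one: "\<And>x::nat \<Rightarrow> real. (\<Sum>j<n. x j) = 1 \<Longrightarrow> eval_poly p x = 1"
    using assms(3) unfolding H_class_def by auto
  define m where "m = n - 1"
  have nm: "n = Suc m" and m1: "m \<ge> 1" using assms(1) unfolding m_def by auto
  define K where "K = Poly_Mapping.keys p"
  have finK: "finite K" unfolding K_def by simp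
  define c where "c \<alpha> = Poly_Mapping.lookup p \<alpha>" for \<alpha>
  define dg where "dg \<alpha> = mono_degree \<alpha>" for \<alpha>
  define w where "w \<alpha> = (\<Prod>i\<in>Poly_Mapping.keys \<alpha>. real (m choose i) ^ Poly_Mapping.lookup \<alpha> i)" for \<alpha> :: "nat \<Rightarrow>\<^sub>0 nat"
  define e where "e \<alpha> = (\<Sum>i\<in>Poly_Mapping.keys \<alpha>. i * Poly_Mapping.lookup \<alpha> i)" for \<alpha> :: "nat \<Rightarrow>\<^sub>0 nat"
  define G where "G k = {\<alpha> \<in> K. dg \<alpha> = k}" for k
  define Q where "Q k = (\<Sum>\<alpha>\<in>G k. monom (c \<alpha> * w \<alpha>) (e \<alpha>))" for k
  have finG: "finite (G k)" for k using finK unfolding G_def by simp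
  have keys_sub: "Poly_Mapping.keys \<alpha> \<subseteq> {..<n}" if "\<alpha> \<in> K" for \<alpha>
    using vars that unfolding poly_in_vars_def K_def by auto
  have wpos: "w \<alpha> > 0" if "\<alpha> \<in> K" for \<alpha>
    unfolding w_def
  proof (rule prod_pos)
    fix i assume "i \<in> Poly_Mapping.keys \<alpha>"
    then have "i \<le> m" using keys_sub[OF that] nm by auto
    then show "0 < real (m choose i) ^ Poly_Mapping.lookup \<alpha> i" by simp
  qed
  have cpos: "c \<alpha> > 0" if "\<alpha> \<in> K" for \<alpha>
    using that nn[of \<alpha>] unfolding c_def K_def by (simp add: in_keys_iff order_le_less)
  have dgle: "dg \<alpha> \<le> d" if "\<alpha> \<in> K" for \<alpha>
  proof -
    have "dg \<alpha> \<le> Max (insert 0 (mono_degree ` K))"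
      using that finK unfolding dg_def by (intro Max_ge) auto
    then show ?thesis using td unfolding total_degree_def K_def by simp
  qed
  obtain \<alpha>0 where a0: "\<alpha>0 \<in> K" "dg \<alpha>0 = d"
  proof -
    have "Max (insert 0 (mono_degree ` K)) \<in> insert 0 (mono_degree ` K)"
      using finK by (intro Max_in) auto
    moreover have "Max (insert 0 (mono_degree ` K)) = d" using td unfolding total_degree_def K_def by simp
    ultimately have "d \<in> mono_degree ` K" using assms(2) by auto
    then show ?thesis using that unfolding dg_def by auto
  qed
  have coeffQ: "coeff (Q k) j = (\<Sum>\<alpha>\<in>G k. if e \<alpha> = j then c \<alpha> * w \<alpha> else 0)" for k j
    unfolding Q_def by (simp add: coeff_sum coeff_monom)
  have Qnn: "coeff (Q k) j \<ge> 0" for k j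
    unfolding coeffQ using cpos wpos unfolding G_def
    by (intro sum_nonneg) (auto intro: less_imp_le)
  have Qd: "Q d \<noteq> 0"
  proof -
    have "coeff (Q d) (e \<alpha>0) > 0"
      unfolding coeffQ
    proof (rule sum_pos2)
      show "finite (G d)" by (rule finG)
      show "\<alpha>0 \<in> G d" using a0 unfolding G_def by simp
      show "0 < (if e \<alpha>0 = e \<alpha>0 then c \<alpha>0 * w \<alpha>0 else 0)" using cpos[OF a0(1)] wpos[OF a0(1)] by simp
      show "\<And>i. i \<in> G d \<Longrightarrow> 0 \<le> (if e i = e \<alpha>0 then c i * w i else 0)"
        using cpos wpos unfolding G_def by (auto intro: less_imp_le)
    qed
    then show ?thesis by auto
  qed
  have ident: "(\<Sum>k\<le>d. Q k * ([:1,1:] ^ m) ^ (d - k)) = ([:1,1:] ^ m) ^ d"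
  proof (rule poly_eq_pos)
    fix t :: real assume t: "t > 0"
    define b where "b = (1 + t) ^ m"
    have bpos: "b > 0" unfolding b_def using t by simp
    define x where "x i = real (m choose i) * t ^ i / b" for i
    have sx: "(\<Sum>j<n. x j) = 1"
    proof -
      have "(\<Sum>j<n. x j) = (\<Sum>j\<le>m. real (m choose j) * t ^ j) / b"
        unfolding x_def nm lessThan_Suc_atMost by (simp add: sum_divide_distrib)
      also have "(\<Sum>j\<le>m. real (m choose j) * t ^ j) = (t + 1) ^ m"
        by (simp add: binomial_ring)
      also have "(t + 1) ^ m = b" unfolding b_def by (simp only: add.commute)
      finally have sxb: "(\<Sum>j<n. x j) = b / b" .
      have bb: "b / b = 1" using bpos by simp
      show ?thesis by (rule trans[OF sxb bb])
    qed
    have mono_eval: "(\<Prod>i\<in>Poly_Mapping.keys \<alpha>. x i ^ Poly_Mapping.lookup \<alpha> i) = w \<alpha> * t ^ e \<alpha> / b ^ dg \<alpha>" for \<alpha>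
    proof -
      have "(\<Prod>i\<in>Poly_Mapping.keys \<alpha>. x i ^ Poly_Mapping.lookup \<alpha> i)
          = (\<Prod>i\<in>Poly_Mapping.keys \<alpha>. real (m choose i) ^ Poly_Mapping.lookup \<alpha> i * t ^ (i * Poly_Mapping.lookup \<alpha> i) / b ^ Poly_Mapping.lookup \<alpha> i)"
        unfolding x_def by (simp add: power_mult_distrib power_divide power_mult)
      also have "\<dots> = w \<alpha> * (\<Prod>i\<in>Poly_Mapping.keys \<alpha>. t ^ (i * Poly_Mapping.lookup \<alpha> i)) / (\<Prod>i\<in>Poly_Mapping.keys \<alpha>. b ^ Poly_Mapping.lookup \<alpha> i)"
        unfolding w_def by (simp add: prod_dividef prod.distrib)
      also have "\<dots> = w \<alpha> * t ^ e \<alpha> / b ^ dg \<alpha>"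
        unfolding e_def dg_def mono_degree_def by (simp add: power_sum)
      finally show ?thesis .
    qed
    have ev: "(\<Sum>\<alpha>\<in>K. c \<alpha> * (w \<alpha> * t ^ e \<alpha> / b ^ dg \<alpha>)) = 1"
      using one[OF sx] unfolding eval_poly_def mono_eval K_def c_def by simp
    have "b ^ d = (\<Sum>\<alpha>\<in>K. c \<alpha> * (w \<alpha> * t ^ e \<alpha> / b ^ dg \<alpha>)) * b ^ d" using ev by simp
    also have "\<dots> = (\<Sum>\<alpha>\<in>K. c \<alpha> * w \<alpha> * t ^ e \<alpha> * b ^ (d - dg \<alpha>))"
      unfolding sum_distrib_right
    proof (rule sum.cong)
      fix \<alpha> assume "\<alpha> \<in> K"
      then have "dg \<alpha> \<le> d" by (rule dgle)
      then have "b ^ d / b ^ dg \<alpha> = b ^ (d - dg \<alpha>)" using bpos by (simp add: power_diff)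
      then show "c \<alpha> * (w \<alpha> * t ^ e \<alpha> / b ^ dg \<alpha>) * b ^ d = c \<alpha> * w \<alpha> * t ^ e \<alpha> * b ^ (d - dg \<alpha>)"
        by (metis (no_types, lifting) mult.assoc times_divide_eq_left times_divide_eq_right)
    qed simp
    also have "\<dots> = (\<Sum>k\<le>d. \<Sum>\<alpha>\<in>G k. c \<alpha> * w \<alpha> * t ^ e \<alpha> * b ^ (d - dg \<alpha>))"
      unfolding G_def using finK dgle by (intro sum.group[symmetric]) auto
    also have "\<dots> = (\<Sum>k\<le>d. poly (Q k) t * b ^ (d - k))"
    proof (rule sum.cong)
      fix k assume "k \<in> {..d}"
      have "poly (Q k) t * b ^ (d - k) = (\<Sum>\<alpha>\<in>G k. c \<alpha> * w \<alpha> * t ^ e \<alpha> * b ^ (d - k))"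
        unfolding Q_def by (simp add: poly_sum poly_monom sum_distrib_right)
      also have "\<dots> = (\<Sum>\<alpha>\<in>G k. c \<alpha> * w \<alpha> * t ^ e \<alpha> * b ^ (d - dg \<alpha>))"
        unfolding G_def by (rule sum.cong) auto
      finally show "(\<Sum>\<alpha>\<in>G k. c \<alpha> * w \<alpha> * t ^ e \<alpha> * b ^ (d - dg \<alpha>)) = poly (Q k) t * b ^ (d - k)" by simp
    qed simp
    finally have "b ^ d = (\<Sum>k\<le>d. poly (Q k) t * b ^ (d - k))" .
    moreover have "poly [:1,1:] t = 1 + t" by simp
    ultimately show "poly (\<Sum>k\<le>d. Q k * ([:1,1:] ^ m) ^ (d - k)) t = poly (([:1,1:] ^ m) ^ d) t"
      unfolding b_def by (simp add: poly_sum poly_power)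
  qed
  have main: "m * d + 3 \<le> 2 * (\<Sum>k\<le>d. card (supp (Q k)))"
    by (rule core[OF m1 assms(2) Qnn Qd ident])
  have supp_le: "card (supp (Q k)) \<le> card (G k)" for k
  proof -
    have "supp (Q k) \<subseteq> e ` G k"
    proof
      fix j assume "j \<in> supp (Q k)"
      then have "(\<Sum>\<alpha>\<in>G k. if e \<alpha> = j then c \<alpha> * w \<alpha> else 0) \<noteq> 0"
        unfolding supp_def coeffQ by simp
      then have nz: "(\<Sum>\<alpha>\<in>G k. if e \<alpha> = j then c \<alpha> * w \<alpha> else 0) \<noteq> 0" .
      show "j \<in> e ` G k"
      proof (rule ccontr)
        assume nj: "j \<notin> e ` G k"
        have "(\<Sum>\<alpha>\<in>G k. if e \<alpha> = j then c \<alpha> * w \<alpha> else 0) = 0"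
          by (rule sum.neutral) (use nj in auto)
        then show False using nz by simp
      qed
    qed
    then have "card (supp (Q k)) \<le> card (e ` G k)" by (intro card_mono) (auto intro: finite_imageI finG)
    also have "\<dots> \<le> card (G k)" by (rule card_image_le[OF finG])
    finally show ?thesis .
  qed
  have "(\<Sum>k\<le>d. card (supp (Q k))) \<le> (\<Sum>k\<le>d. card (G k))" by (intro sum_mono supp_le)
  also have "(\<Sum>k\<le>d. card (G k)) = card K"
  proof -
    have "(\<Sum>k\<le>d. card (G k)) = (\<Sum>k\<le>d. \<Sum>\<alpha>\<in>{\<alpha> \<in> K. dg \<alpha> = k}. (1::nat))"
      unfolding G_def by simp
    also have "\<dots> = (\<Sum>\<alpha>\<in>K. (1::nat))" using finK dgle by (intro sum.group) auto
    finally show ?thesis by simp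
  qed
  finally have sK: "(\<Sum>k\<le>d. card (supp (Q k))) \<le> card K" .
  have "m * d + 3 \<le> 2 * card K"
    using main mult_le_mono2[OF sK, of 2] by (rule order_trans)
  then have "real (m * d + 3) \<le> real (2 * card K)" by (simp only: of_nat_le_iff)
  then have r0: "real m * real d + 3 \<le> 2 * real (num_monomials p)"
    unfolding num_monomials_def K_def by simp
  have r1: "real d * real m \<le> 2 * real (num_monomials p) - 3"
    using r0 mult.commute[of "real d" "real m"] by linarith
  have r2: "real n - 1 = real m" using nm by simp
  have r3: "real m > 0" using m1 by simp
  have "real d \<le> (2 * real (num_monomials p) - 3) / real m"
    using r1 r3 by (simp only: pos_le_divide_eq)
  then show ?thesis using r2 by simp
qed

end
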